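(* Let $k$ be a field of characteristic zero, $S=k[x_1,x_2,x_3]$, and $(S,L)$ a triangularizable Lie–Rinehart algebra with basis $\alpha_1,\alpha_2,\alpha_3$ satisfying the Bézout condition, with enveloping algebra $U$. Let $\{f_l^i:i\in\{1,2\},l\in\{1,2,3\}\}\subset S$ and $\omega=\sum_{l=1}^3(f_l^2\alpha_2+f_l^1\alpha_1)\hat x_l\in\mathcal{X}^1$. If $\omega$ is a cocycle, then there exist unique $g_{11},g_{12},g_{22}\in S$ with $g_{11}\alpha_1(x_1)=f_1^1$, $g_{12}\alpha_1(x_1)=f_1^2$ and $g_{22}\alpha_2(x_2)=f_2^2-g_{12}\alpha_1(x_2)$, and these satisfy $$\omega\equiv d^0\big(\tfrac12g_{11}\alpha_1^2+g_{12}\alpha_2\alpha_1+\tfrac12g_{22}\alpha_2^2\big)\pmod{F_0\mathcal{X}^1}.$$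
   Context: Triangularizable: $L\subseteq\operatorname{Der}(S)$ an $S$-submodule and Lie subalgebra, free with basis of derivations $\alpha_1,\alpha_2,\alpha_3$, $\alpha_i(x_j)=0$ for $i>j$, $\alpha_1(x_1)\alpha_2(x_2)\alpha_3(x_3)\ne0$. Bézout: $\alpha_2(x_2),\alpha_2(x_3)$ coprime and $\alpha_1(x_1)$ coprime with $\alpha_1(x_2)\alpha_2(x_3)-\alpha_2(x_2)\alpha_1(x_3)$. In $U$, $[\alpha,s]=\alpha(s)$ for $\alpha\in L,s\in S$. $\mathcal{X}^q=U\otimes_k\operatorname{Hom}_k(\Lambda^qW,k)$ with $W=\operatorname{span}(x_1,x_2,x_3)$ and dual basis $\hat x_l$; $d^0(u)=\sum_k[u,x_k]\hat x_k$ and $d^1(\sum_ku_k\hat x_k)=\sum_{k<l}([u_k,x_l]-[u_l,x_k])\hat x_k\wedge\hat x_l$; $\omega$ is a cocycle if $d^1\omega=0$. $F_0\mathcal{X}^1=S\hat x_1\oplus S\hat x_2\oplus S\hat x_3$. *)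

theory Defs
  imports "HOL-Computational_Algebra.Polynomial"
begin

text \<open>The polynomial ring S = k[x1,x2,x3] is modelled as k[x1][x2][x3], i.e. the type
  'k poly poly poly; x3 is the outermost variable, x1 the innermost one.\<close>

definition Xv :: "nat \<Rightarrow> 'k::comm_ring_1 poly poly poly" where
  "Xv i = (if i = 1 then [:[:[:0, 1:]:]:] else if i = 2 then [:[:0, 1:]:] else [:0, 1:])"

definition cst :: "'k::comm_ring_1 \<Rightarrow> 'k poly poly poly" where
  "cst c = [:[:[:c:]:]:]"

definition is_kder :: "('k::comm_ring_1 poly poly poly \<Rightarrow> 'k poly poly poly) \<Rightarrow> bool" where
  "is_kder D \<longleftrightarrow> (\<forall>a b. D (a + b) = D a + D b) \<and> (\<forall>c a. D (cst c * a) = cst c * D a)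
     \<and> (\<forall>a b. D (a * b) = a * D b + b * D a)"

definition span3 :: "('s::comm_ring_1 \<Rightarrow> 's) \<Rightarrow> ('s \<Rightarrow> 's) \<Rightarrow> ('s \<Rightarrow> 's) \<Rightarrow> ('s \<Rightarrow> 's) set" where
  "span3 a1 a2 a3 = {D. \<exists>s1 s2 s3. D = (\<lambda>f. s1 * a1 f + s2 * a2 f + s3 * a3 f)}"

definition triangularizable ::
  "('k::comm_ring_1 poly poly poly \<Rightarrow> 'k poly poly poly) \<Rightarrow> ('k poly poly poly \<Rightarrow> 'k poly poly poly)
   \<Rightarrow> ('k poly poly poly \<Rightarrow> 'k poly poly poly) \<Rightarrow> bool" where
  "triangularizable a1 a2 a3 \<longleftrightarrow>
     is_kder a1 \<and> is_kder a2 \<and> is_kder a3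
   \<and> (\<forall>D \<in> span3 a1 a2 a3. \<forall>E \<in> span3 a1 a2 a3. (\<lambda>f. D (E f) - E (D f)) \<in> span3 a1 a2 a3)
   \<and> (\<forall>s1 s2 s3. (\<lambda>f. s1 * a1 f + s2 * a2 f + s3 * a3 f) = (\<lambda>f. 0) \<longrightarrow> s1 = 0 \<and> s2 = 0 \<and> s3 = 0)
   \<and> a2 (Xv 1) = 0 \<and> a3 (Xv 1) = 0 \<and> a3 (Xv 2) = 0
   \<and> a1 (Xv 1) * a2 (Xv 2) * a3 (Xv 3) \<noteq> 0"

definition bezout_cond ::
  "('k::field poly poly poly \<Rightarrow> 'k poly poly poly) \<Rightarrow> ('k poly poly poly \<Rightarrow> 'k poly poly poly) \<Rightarrow> bool" where
  "bezout_cond a1 a2 \<longleftrightarrow>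
     coprime (a2 (Xv 2)) (a2 (Xv 3))
   \<and> coprime (a1 (Xv 1)) (a1 (Xv 2) * a2 (Xv 3) - a2 (Xv 2) * a1 (Xv 3))"

definition brk :: "'u::ring_1 \<Rightarrow> 'u \<Rightarrow> 'u" where
  "brk a b = a * b - b * a"

definition pbw_mon :: "'u::ring_1 \<Rightarrow> 'u \<Rightarrow> 'u \<Rightarrow> nat \<times> nat \<times> nat \<Rightarrow> 'u" where
  "pbw_mon A1 A2 A3 m = (case m of (p, q, r) \<Rightarrow> A1 ^ p * A2 ^ q * A3 ^ r)"

text \<open>U (with structure maps iota : S -> U and j : L -> U) is the enveloping algebra of the
  Lie-Rinehart algebra (S, L), L = span3 a1 a2 a3: the defining relations hold and the
  ordered monomials in the basis form a left S-basis of U (PBW).\<close>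
definition is_env_alg ::
  "('s::comm_ring_1 \<Rightarrow> 'u::ring_1) \<Rightarrow> (('s \<Rightarrow> 's) \<Rightarrow> 'u) \<Rightarrow> ('s \<Rightarrow> 's) \<Rightarrow> ('s \<Rightarrow> 's) \<Rightarrow> ('s \<Rightarrow> 's) \<Rightarrow> bool" where
  "is_env_alg \<iota> j a1 a2 a3 \<longleftrightarrow>
     \<iota> 1 = 1 \<and> (\<forall>a b. \<iota> (a + b) = \<iota> a + \<iota> b) \<and> (\<forall>a b. \<iota> (a * b) = \<iota> a * \<iota> b)
   \<and> (\<forall>D \<in> span3 a1 a2 a3. \<forall>E \<in> span3 a1 a2 a3. j (\<lambda>f. D f + E f) = j D + j E)
   \<and> (\<forall>s. \<forall>D \<in> span3 a1 a2 a3. j (\<lambda>f. s * D f) = \<iota> s * j D)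
   \<and> (\<forall>D \<in> span3 a1 a2 a3. \<forall>E \<in> span3 a1 a2 a3. j (\<lambda>f. D (E f) - E (D f)) = brk (j D) (j E))
   \<and> (\<forall>D \<in> span3 a1 a2 a3. \<forall>s. brk (j D) (\<iota> s) = \<iota> (D s))
   \<and> (\<forall>u. \<exists>!c. finite {m. c m \<noteq> 0} \<and>
          u = (\<Sum>m \<in> {m. c m \<noteq> 0}. \<iota> (c m) * pbw_mon (j a1) (j a2) (j a3) m))"

text \<open>Cochains in X^1 are represented by their coefficient functions k \<mapsto> u_k, k = 1,2,3.\<close>
definition d0 :: "('k::comm_ring_1 poly poly poly \<Rightarrow> 'u::ring_1) \<Rightarrow> 'u \<Rightarrow> nat \<Rightarrow> 'u" where
  "d0 \<iota> u = (\<lambda>k. brk u (\<iota> (Xv k)))"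

definition is_cocycle1 :: "('k::comm_ring_1 poly poly poly \<Rightarrow> 'u::ring_1) \<Rightarrow> (nat \<Rightarrow> 'u) \<Rightarrow> bool" where
  "is_cocycle1 \<iota> \<omega> \<longleftrightarrow>
     (\<forall>k l. 1 \<le> k \<and> k < l \<and> l \<le> 3 \<longrightarrow> brk (\<omega> k) (\<iota> (Xv l)) - brk (\<omega> l) (\<iota> (Xv k)) = 0)"

text \<open>Congruence modulo F_0 X^1 = S xhat_1 + S xhat_2 + S xhat_3.\<close>
definition cong_F0 :: "('s::comm_ring_1 \<Rightarrow> 'u::ring_1) \<Rightarrow> (nat \<Rightarrow> 'u) \<Rightarrow> (nat \<Rightarrow> 'u) \<Rightarrow> bool" where
  "cong_F0 \<iota> \<omega> \<eta> \<longleftrightarrow> (\<forall>k \<in> {1, 2, 3}. \<omega> k - \<eta> k \<in> range \<iota>)"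

end

theory Submission
  imports Defs "HOL-Computational_Algebra.Polynomial_Factorial" "HOL-Computational_Algebra.Field_as_Ring"
begin

instantiation fract :: (idom) "{normalization_euclidean_semiring, euclidean_ring}"
begin

definition [simp]: "normalize_fract \<equiv> (normalize_field :: 'a fract \<Rightarrow> _)"
definition [simp]: "unit_factor_fract = (unit_factor_field :: 'a fract \<Rightarrow> _)"
definition [simp]: "euclidean_size_fract = (euclidean_size_field :: 'a fract \<Rightarrow> _)"
definition [simp]: "modulo_fract = (mod_field :: 'a fract \<Rightarrow> _)"

instance by standard (simp_all add: dvd_field_iff divide_simps)

end

instantiation fract :: (idom) euclidean_ring_gcd
begin

definition gcd_fract :: "'a fract \<Rightarrow> 'a fract \<Rightarrow> 'a fract" where
  "gcd_fract \<equiv> Euclidean_Algorithm.gcd"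
definition lcm_fract :: "'a fract \<Rightarrow> 'a fract \<Rightarrow> 'a fract" where
  "lcm_fract \<equiv> Euclidean_Algorithm.lcm"
definition Gcd_fract :: "'a fract set \<Rightarrow> 'a fract" where
 "Gcd_fract \<equiv> Euclidean_Algorithm.Gcd"
definition Lcm_fract :: "'a fract set \<Rightarrow> 'a fract" where
 "Lcm_fract \<equiv> Euclidean_Algorithm.Lcm"

instance
  by (standard, simp_all add: gcd_fract_def lcm_fract_def Gcd_fract_def Lcm_fract_def)

end

instantiation fract :: (idom) unique_euclidean_ring
begin

definition [simp]: "division_segment_fract (x :: 'a fract) = (1 :: 'a fract)"

instance by standard (auto split: if_splits)
end

instance fract :: (idom) field_gcd by standard auto


definition rhom :: "('a::comm_ring_1 \<Rightarrow> 'b::comm_ring_1) \<Rightarrow> bool" where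
  "rhom f \<longleftrightarrow> f 0 = 0 \<and> f 1 = 1 \<and> (\<forall>x y. f (x + y) = f x + f y) \<and> (\<forall>x y. f (x * y) = f x * f y)"

definition risoP :: "('a::comm_ring_1 \<Rightarrow> 'b::comm_ring_1) \<Rightarrow> ('b \<Rightarrow> 'a) \<Rightarrow> bool" where
  "risoP f g \<longleftrightarrow> rhom f \<and> rhom g \<and> (\<forall>x. g (f x) = x) \<and> (\<forall>y. f (g y) = y)"

lemma rhom_poly:
  assumes "rhom f"
  shows "rhom (map_poly f)"
proof -
  have f0: "f 0 = 0" and f1: "f 1 = 1" and fa: "\<And>x y. f (x + y) = f x + f y"
    and fm: "\<And>x y. f (x * y) = f x * f y" using assms unfolding rhom_def by auto
  have add: "map_poly f (p + q) = map_poly f p + map_poly f q" for p q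
    by (rule poly_eqI) (simp add: coeff_map_poly f0 fa)
  have mul: "map_poly f (p * q) = map_poly f p * map_poly f q" for p q
  proof (induction p rule: pCons_induct)
    case 0 then show ?case by simp
  next
    case (pCons a p)
    have "map_poly f (pCons a p * q) = map_poly f (smult a q + pCons 0 (p * q))" by simp
    also have "\<dots> = smult (f a) (map_poly f q) + pCons 0 (map_poly f p * map_poly f q)"
      unfolding add map_poly_smult[OF f0 fm] Polynomial.map_poly_pCons[of f, OF f0] pCons.IH f0 ..
    also have "\<dots> = map_poly f (pCons a p) * map_poly f q"
      by (simp add: Polynomial.map_poly_pCons[of f, OF f0])
    finally show ?case .
  qed
  show ?thesis unfolding rhom_def using add mul f1 by simp
qed

lemma riso_poly:
  assumes "risoP f g"
  shows "risoP (map_poly f) (map_poly g)"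
proof -
  have f: "rhom f" and g: "rhom g" and gf: "\<And>x. g (f x) = x" and fg: "\<And>y. f (g y) = y"
    using assms unfolding risoP_def by auto
  have f0: "f 0 = 0" and g0: "g 0 = 0" using f g unfolding rhom_def by auto
  show ?thesis unfolding risoP_def
    using rhom_poly[OF f] rhom_poly[OF g]
    by (simp add: map_poly_map_poly f0 g0 o_def gf fg)
qed

lemma riso_dvd:
  fixes f :: "'a::{comm_ring_1,algebraic_semidom} \<Rightarrow> 'b::{comm_ring_1,algebraic_semidom}"
  assumes "risoP f g"
  shows "f a dvd f b \<longleftrightarrow> a dvd b"
proof -
  have f: "rhom f" and g: "rhom g" and gf: "\<And>x. g (f x) = x"
    using assms unfolding risoP_def by auto
  show ?thesis
  proof
    assume "f a dvd f b"
    then obtain k where "f b = f a * k" by (elim dvdE)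
    then have "g (f b) = g (f a) * g k" using g unfolding rhom_def by simp
    then show "a dvd b" by (simp add: gf)
  next
    assume "a dvd b"
    then obtain k where "b = a * k" by (elim dvdE)
    then show "f a dvd f b" using f unfolding rhom_def by simp
  qed
qed

lemma riso_coprime:
  fixes f :: "'a::{comm_ring_1,algebraic_semidom} \<Rightarrow> 'b::{comm_ring_1,algebraic_semidom}"
  assumes "risoP f g" and "Rings.coprime a b"
  shows "Rings.coprime (f a) (f b)"
proof (rule Rings.coprimeI)
  fix d assume "d dvd f a" "d dvd f b"
  have fg: "\<And>y. f (g y) = y" using assms(1) unfolding risoP_def by auto
  have "f (g d) dvd f a" "f (g d) dvd f b" using \<open>d dvd f a\<close> \<open>d dvd f b\<close> by (simp_all add: fg)
  then have "g d dvd a" "g d dvd b" using riso_dvd[OF assms(1)] by auto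
  then have "is_unit (g d)" using assms(2) by (meson Rings.coprime_common_divisor)
  then have "f (g d) dvd f 1" using riso_dvd[OF assms(1)] by blast
  moreover have "f 1 = 1" using assms(1) unfolding risoP_def rhom_def by simp
  ultimately show "is_unit d" by (simp add: fg)
qed

definition fr_inv :: "'k::field fract \<Rightarrow> 'k" where
  "fr_inv x = (SOME a. to_fract a = x)"

lemma to_fract_surj: "\<exists>a. to_fract (a::'k::field) = x"
proof (cases x)
  case (Fract a b)
  have "to_fract (a / b) * to_fract b = to_fract a" using Fract
    by (simp flip: to_fract_mult)
  then have "to_fract (a / b) = to_fract a / to_fract b" using Fract by (simp add: eq_divide_eq)
  then show ?thesis using Fract by (metis Fract_conv_to_fract)
qed

lemma riso_fract: "risoP (to_fract :: 'k::field \<Rightarrow> _) fr_inv"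
proof -
  have fg: "to_fract (fr_inv y) = y" for y :: "'k fract"
    unfolding fr_inv_def using to_fract_surj[of y] by (rule someI_ex)
  have gf: "fr_inv (to_fract x) = x" for x :: 'k
    using fg[of "to_fract x"] by simp
  have "rhom (fr_inv :: 'k fract \<Rightarrow> 'k)" unfolding rhom_def
  proof (intro conjI allI)
    show "fr_inv 0 = (0::'k)" using gf[of 0] by simp
    show "fr_inv 1 = (1::'k)" using gf[of 1] by simp
    fix x y :: "'k fract"
    show "fr_inv (x + y) = fr_inv x + fr_inv y"
      using fg[of "x + y"] fg[of x] fg[of y] by (metis to_fract_add to_fract_eq_iff)
    show "fr_inv (x * y) = fr_inv x * fr_inv y"
      using fg[of "x * y"] fg[of x] fg[of y] by (metis to_fract_mult to_fract_eq_iff)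
  qed
  moreover have "rhom (to_fract :: 'k \<Rightarrow> _)" unfolding rhom_def by simp
  ultimately show ?thesis unfolding risoP_def using fg gf by simp
qed

lemma coprime_dvd_k3:
  fixes a b c :: "'k::field poly poly poly"
  assumes "Rings.coprime a b" "a dvd c * b"
  shows "a dvd c"
proof -
  let ?f = "map_poly (map_poly (map_poly (to_fract :: 'k \<Rightarrow> _)))"
  let ?g = "map_poly (map_poly (map_poly fr_inv))"
  have R: "risoP ?f ?g" by (intro riso_poly riso_fract)
  have m: "?f (c * b) = ?f c * ?f b" using R unfolding risoP_def rhom_def by blast
  have "Rings.coprime (?f a) (?f b)" by (rule riso_coprime[OF R assms(1)])
  moreover have "?f a dvd ?f c * ?f b" using assms(2) riso_dvd[OF R, of a "c * b"] m by simp
  ultimately have "?f a dvd ?f c" by (simp add: coprime_dvd_mult_left_iff)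
  then show ?thesis using riso_dvd[OF R] by blast
qed



lemma core_comm:
  fixes I :: "'s::comm_ring_1 \<Rightarrow> 'u::ring_1"
  assumes mul: "\<And>a b. I (a * b) = I a * I b"
    and add: "\<And>a b. I (a + b) = I a + I b"
    and cA: "\<And>t. A * I t = I t * A + I (D t)"
  shows "brk (I f * A) (I x) = I (f * D x)"
proof -
  have "I x * I f = I f * I x" by (metis mul mult.commute)
  then have "brk (I f * A) (I x) = I f * (A * I x) - I f * I x * A"
    by (simp add: brk_def mult.assoc[symmetric])
  also have "\<dots> = I f * I (D x)" by (simp add: cA algebra_simps)
  finally show ?thesis by (simp add: mul)
qed

lemma core2:
  fixes I :: "'s::comm_ring_1 \<Rightarrow> 'u::ring_1"
  assumes mul: "\<And>a b. I (a * b) = I a * I b"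
    and add: "\<And>a b. I (a + b) = I a + I b"
    and cA: "\<And>t. A * I t = I t * A + I (D t)"
    and cB: "\<And>t. B * I t = I t * B + I (E t)"
  shows "brk (I s * A * B) (I x) = I (s * E x) * A + I (s * D x) * B + I (s * D (E x))"
proof -
  have sw: "I x * I s = I s * I x" by (metis mul mult.commute)
  have "A * B * I x = A * I x * B + A * I (E x)" by (simp add: mult.assoc cB algebra_simps)
  also have "\<dots> = I x * A * B + I (D x) * B + I (E x) * A + I (D (E x))"
    by (simp add: cA algebra_simps)
  finally have e: "A * B * I x = I x * A * B + I (D x) * B + I (E x) * A + I (D (E x))" .
  have "brk (I s * A * B) (I x) = I s * (A * B * I x) - I x * I s * A * B"
    by (simp add: brk_def mult.assoc)
  also have "\<dots> = I s * I (D x) * B + I s * I (E x) * A + I s * I (D (E x))"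
    unfolding e sw by (simp add: algebra_simps)
  finally show ?thesis by (simp add: mul)
qed

lemma brk_add: "brk (a + b) (c::'u::ring_1) = brk a c + brk b c"
  by (simp add: brk_def algebra_simps)

lemma cst_half: "cst (1/2::'k::field_char_0) + cst (1/2) = 1"
proof -
  have "cst (1/2::'k) + cst (1/2) = cst (1/2 + 1/2)" by (simp add: cst_def)
  also have "\<dots> = 1" by (simp add: cst_def one_pCons)
  finally show ?thesis .
qed


theorem lemma4p1:
  fixes \<iota> :: "'k::field_char_0 poly poly poly \<Rightarrow> 'u::ring_1"
    and j :: "('k poly poly poly \<Rightarrow> 'k poly poly poly) \<Rightarrow> 'u"
    and a1 a2 a3 :: "'k poly poly poly \<Rightarrow> 'k poly poly poly"
    and f1 f2 :: "nat \<Rightarrow> 'k poly poly poly"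
  assumes tri: "triangularizable a1 a2 a3"
    and bez: "bezout_cond a1 a2"
    and env: "is_env_alg \<iota> j a1 a2 a3"
    and coc: "is_cocycle1 \<iota> (\<lambda>l. \<iota> (f2 l) * j a2 + \<iota> (f1 l) * j a1)"
  shows "(\<exists>!(g11, g12, g22). g11 * a1 (Xv 1) = f1 1 \<and> g12 * a1 (Xv 1) = f2 1
            \<and> g22 * a2 (Xv 2) = f2 2 - g12 * a1 (Xv 2))
       \<and> (\<forall>g11 g12 g22. g11 * a1 (Xv 1) = f1 1 \<and> g12 * a1 (Xv 1) = f2 1
            \<and> g22 * a2 (Xv 2) = f2 2 - g12 * a1 (Xv 2) \<longrightarrow>
            cong_F0 \<iota> (\<lambda>l. \<iota> (f2 l) * j a2 + \<iota> (f1 l) * j a1)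
              (d0 \<iota> (\<iota> (cst (1/2) * g11) * j a1 ^ 2 + \<iota> g12 * j a2 * j a1
                     + \<iota> (cst (1/2) * g22) * j a2 ^ 2)))"
proof -
  define I where "I = \<iota>"
  define A1 where "A1 = j a1"
  define A2 where "A2 = j a2"
  note E = env[unfolded is_env_alg_def, folded I_def]
  have add: "\<And>a b. I (a + b) = I a + I b" using E[THEN conjunct2, THEN conjunct1] by blast
  have mul: "\<And>a b. I (a * b) = I a * I b" using E[THEN conjunct2, THEN conjunct2, THEN conjunct1] by blast
  have I0: "I 0 = 0" using add[of 0 0] by simp
  have Iminus: "\<And>a b. I (a - b) = I a - I b"
  proof -
    fix a b
    have "I a = I (a - b) + I b" using add[of "a - b" b] by simp
    then show "I (a - b) = I a - I b" by (simp add: eq_diff_eq)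
  qed
  have s1: "a1 \<in> span3 a1 a2 a3" unfolding span3_def by (rule CollectI, rule exI[of _ 1], rule exI[of _ 0], rule exI[of _ 0]) simp
  have s2: "a2 \<in> span3 a1 a2 a3" unfolding span3_def by (rule CollectI, rule exI[of _ 0], rule exI[of _ 1], rule exI[of _ 0]) simp
  have brkD: "\<And>D s. D \<in> span3 a1 a2 a3 \<Longrightarrow> brk (j D) (I s) = I (D s)"
    using E[THEN conjunct2, THEN conjunct2, THEN conjunct2, THEN conjunct2, THEN conjunct2, THEN conjunct2, THEN conjunct1] by blast
  have c1: "A1 * I t = I t * A1 + I (a1 t)" for t
  proof -
    have "A1 * I t - I t * A1 = I (a1 t)" using brkD[OF s1, of t] unfolding A1_def brk_def .
    then show ?thesis by (simp add: diff_eq_eq add.commute)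
  qed
  have c2: "A2 * I t = I t * A2 + I (a2 t)" for t
  proof -
    have "A2 * I t - I t * A2 = I (a2 t)" using brkD[OF s2, of t] unfolding A2_def brk_def .
    then show ?thesis by (simp add: diff_eq_eq add.commute)
  qed
  have pbw: "\<forall>u. \<exists>!c. finite {m. c m \<noteq> 0} \<and>
          u = (\<Sum>m \<in> {m. c m \<noteq> 0}. I (c m) * pbw_mon A1 A2 (j a3) m)"
    using E[THEN conjunct2, THEN conjunct2, THEN conjunct2, THEN conjunct2, THEN conjunct2, THEN conjunct2, THEN conjunct2] unfolding A1_def A2_def .
  have inj0: "s = 0" if "I s = 0" for s
  proof (rule ccontr)
    assume sn: "s \<noteq> 0"
    define c where "c = (\<lambda>m::nat\<times>nat\<times>nat. if m = (0,0,0) then s else 0)"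
    define Q where "Q = (\<lambda>c. finite {m. c m \<noteq> 0} \<and>
          (0::'u) = (\<Sum>m \<in> {m. c m \<noteq> 0}. I (c m) * pbw_mon A1 A2 (j a3) m))"
    have u: "\<exists>!c. Q c" unfolding Q_def using pbw by (rule spec)
    have cs: "{m. c m \<noteq> 0} = {(0,0,0)}" using sn by (auto simp: c_def)
    have q1: "Q c" unfolding Q_def cs using that by (simp add: c_def pbw_mon_def)
    have q2: "Q (\<lambda>m. 0)" unfolding Q_def by simp
    from u obtain c0 where h: "\<And>y. Q y \<Longrightarrow> y = c0" by (elim ex1E) blast
    have "c = (\<lambda>m. 0)" using h[OF q1] h[OF q2] by simp
    then have "c (0,0,0) = 0" by simp
    then show False using sn by (simp add: c_def)
  qed
  have inj: "s = t" if "I s = I t" for s t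
    using inj0[of "s - t"] that Iminus by simp
  have bw: "\<And>f g x. brk (I f * A2 + I g * A1) (I x) = I (f * a2 x + g * a1 x)"
    by (simp add: brk_add core_comm[OF mul add c1] core_comm[OF mul add c2] add)
  have cocS: "f2 k * a2 (Xv l) + f1 k * a1 (Xv l) = f2 l * a2 (Xv k) + f1 l * a1 (Xv k)"
    if "1 \<le> k" "k < l" "l \<le> 3" for k l
  proof -
    have "brk (I (f2 k) * A2 + I (f1 k) * A1) (I (Xv l)) - brk (I (f2 l) * A2 + I (f1 l) * A1) (I (Xv k)) = 0"
      using coc[unfolded is_cocycle1_def, rule_format, of k l] that unfolding I_def A1_def A2_def by simp
    then show ?thesis unfolding bw by (intro inj) simp
  qed
  have tri': "a2 (Xv 1) = 0" "a1 (Xv 1) * a2 (Xv 2) * a3 (Xv 3) \<noteq> 0"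
  proof -
    note T = tri[unfolded triangularizable_def]
    show "a2 (Xv 1) = 0" using T[THEN conjunct2, THEN conjunct2, THEN conjunct2, THEN conjunct2, THEN conjunct2, THEN conjunct1] .
    show "a1 (Xv 1) * a2 (Xv 2) * a3 (Xv 3) \<noteq> 0" using T[THEN conjunct2, THEN conjunct2, THEN conjunct2, THEN conjunct2, THEN conjunct2, THEN conjunct2, THEN conjunct2, THEN conjunct2] .
  qed
  define a where "a = a1 (Xv 1)"
  define p where "p = a1 (Xv 2)"
  define q where "q = a1 (Xv 3)"
  define r where "r = a2 (Xv 2)"
  define t where "t = a2 (Xv 3)"
  have an: "a \<noteq> 0" and rn: "r \<noteq> 0" using tri'(2) unfolding a_def r_def by auto
  have cop1: "coprime r t" and cop2: "coprime a (p * t - r * q)"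
    using bez unfolding bezout_cond_def r_def t_def a_def p_def q_def by simp_all
  have e12: "f2 1 * r + f1 1 * p = f1 2 * a"
    using cocS[of 1 2] tri'(1) unfolding a_def p_def r_def by simp
  have e13: "f2 1 * t + f1 1 * q = f1 3 * a"
    using cocS[of 1 3] tri'(1) unfolding a_def q_def t_def by simp
  have e23: "f2 2 * t + f1 2 * q = f2 3 * r + f1 3 * p"
    using cocS[of 2 3] unfolding p_def q_def r_def t_def by simp
  have "f1 1 * (p * t - r * q) = a * (f1 2 * t - f1 3 * r)"
  proof -
    have "f1 1 * (p * t - r * q) = (f1 1 * p) * t - (f1 1 * q) * r" by (simp add: algebra_simps)
    also have "\<dots> = (f1 2 * a - f2 1 * r) * t - (f1 3 * a - f2 1 * t) * r"
      using e12 e13 by (metis add_diff_cancel_left')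
    also have "\<dots> = a * (f1 2 * t - f1 3 * r)" by (simp add: algebra_simps)
    finally show ?thesis .
  qed
  then have "a dvd f1 1 * (p * t - r * q)" by simp
  then have "a dvd f1 1" using coprime_dvd_k3[OF cop2] by blast
  then obtain g11 where "f1 1 = a * g11" by (rule dvdE)
  then have g11: "g11 * a = f1 1" by (simp add: mult.commute)
  have "f2 1 * (p * t - r * q) = a * (f1 3 * p - f1 2 * q)"
  proof -
    have "f2 1 * (p * t - r * q) = (f2 1 * t) * p - (f2 1 * r) * q" by (simp add: algebra_simps)
    also have "\<dots> = (f1 3 * a - f1 1 * q) * p - (f1 2 * a - f1 1 * p) * q"
      using e12 e13 by (metis add_diff_cancel_right')
    also have "\<dots> = a * (f1 3 * p - f1 2 * q)" by (simp add: algebra_simps)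
    finally show ?thesis .
  qed
  then have "a dvd f2 1 * (p * t - r * q)" by simp
  then have "a dvd f2 1" using coprime_dvd_k3[OF cop2] by blast
  then obtain g12 where "f2 1 = a * g12" by (rule dvdE)
  then have g12: "g12 * a = f2 1" by (simp add: mult.commute)
  have F12: "f1 2 = g12 * r + g11 * p"
  proof -
    have "a * f1 2 = f2 1 * r + f1 1 * p" using e12 by (simp add: mult.commute)
    also have "\<dots> = a * (g12 * r + g11 * p)" unfolding g11[symmetric] g12[symmetric] by (simp add: algebra_simps)
    finally have "a * f1 2 = a * (g12 * r + g11 * p)" .
    then show ?thesis using an by simp
  qed
  have F13: "f1 3 = g12 * t + g11 * q"
  proof -
    have "a * f1 3 = f2 1 * t + f1 1 * q" using e13 by (simp add: mult.commute)
    also have "\<dots> = a * (g12 * t + g11 * q)" unfolding g11[symmetric] g12[symmetric] by (simp add: algebra_simps)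
    finally have "a * f1 3 = a * (g12 * t + g11 * q)" .
    then show ?thesis using an by simp
  qed
  have "(f2 2 - g12 * p) * t = r * (f2 3 - g12 * q)"
  proof -
    have "(f2 2 - g12 * p) * t = (f2 2 * t + f1 2 * q) - f1 2 * q - g12 * p * t" by (simp add: algebra_simps)
    also have "\<dots> = f2 3 * r + f1 3 * p - f1 2 * q - g12 * p * t" using e23 by simp
    also have "\<dots> = r * (f2 3 - g12 * q)" unfolding F12 F13 by (simp add: algebra_simps)
    finally show ?thesis .
  qed
  then have "r dvd (f2 2 - g12 * p) * t" by simp
  then have "r dvd f2 2 - g12 * p" using coprime_dvd_k3[OF cop1] by blast
  then obtain g22 where "f2 2 - g12 * p = r * g22" by (rule dvdE)
  then have g22: "g22 * r = f2 2 - g12 * p" by (simp add: mult.commute)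
  have P1: "\<exists>!(g11, g12, g22). g11 * a1 (Xv 1) = f1 1 \<and> g12 * a1 (Xv 1) = f2 1
            \<and> g22 * a2 (Xv 2) = f2 2 - g12 * a1 (Xv 2)"
  proof (rule ex1I[of _ "(g11, g12, g22)"])
    show "case (g11, g12, g22) of (g11, g12, g22) \<Rightarrow> g11 * a1 (Xv 1) = f1 1 \<and> g12 * a1 (Xv 1) = f2 1
            \<and> g22 * a2 (Xv 2) = f2 2 - g12 * a1 (Xv 2)"
      using g11 g12 g22 unfolding a_def r_def p_def by simp
  next
    fix y assume "case y of (g11, g12, g22) \<Rightarrow> g11 * a1 (Xv 1) = f1 1 \<and> g12 * a1 (Xv 1) = f2 1
            \<and> g22 * a2 (Xv 2) = f2 2 - g12 * a1 (Xv 2)"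
    then obtain h11 h12 h22 where y: "y = (h11, h12, h22)" and h: "h11 * a = f1 1" "h12 * a = f2 1"
      "h22 * r = f2 2 - h12 * p" unfolding a_def r_def p_def by (cases y) auto
    have "h11 = g11" using h(1) g11 an by (metis mult_cancel_right)
    moreover have "h12 = g12" using h(2) g12 an by (metis mult_cancel_right)
    moreover have "h22 = g22" using h(3) g22 rn \<open>h12 = g12\<close> by (metis mult_cancel_right)
    ultimately show "y = (g11, g12, g22)" using y by simp
  qed
  have P2: "cong_F0 \<iota> (\<lambda>l. \<iota> (f2 l) * j a2 + \<iota> (f1 l) * j a1)
              (d0 \<iota> (\<iota> (cst (1/2) * h11) * j a1 ^ 2 + \<iota> h12 * j a2 * j a1
                     + \<iota> (cst (1/2) * h22) * j a2 ^ 2))"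
    if h: "h11 * a = f1 1" "h12 * a = f2 1" "h22 * r = f2 2 - h12 * p" for h11 h12 h22
  proof -
    have hh: "h11 = g11" "h12 = g12" "h22 = g22"
      using P1 h g11 g12 g22 unfolding a_def r_def p_def by auto
    define c where "c = cst (1/2::'k)"
    have cc: "c + c = 1" unfolding c_def by (rule cst_half)
    have key: "I (f2 k) * A2 + I (f1 k) * A1 - brk (I (c * g11) * A1 ^ 2 + I g12 * A2 * A1 + I (c * g22) * A2 ^ 2) (I x)
           \<in> range I"
      if k1: "f1 k = g11 * a1 x + g12 * a2 x" and k2: "f2 k = g12 * a1 x + g22 * a2 x" for k x
    proof -
      have sq: "\<And>s B. I s * B ^ 2 = I s * B * B" by (simp add: power2_eq_square mult.assoc)
      have "brk (I (c * g11) * A1 ^ 2 + I g12 * A2 * A1 + I (c * g22) * A2 ^ 2) (I x)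
        = I (c * g11 * a1 x) * A1 + I (c * g11 * a1 x) * A1 + I (c * g11 * a1 (a1 x))
          + (I (g12 * a1 x) * A2 + I (g12 * a2 x) * A1 + I (g12 * a2 (a1 x)))
          + (I (c * g22 * a2 x) * A2 + I (c * g22 * a2 x) * A2 + I (c * g22 * a2 (a2 x)))"
        unfolding sq brk_add core2[OF mul add c1 c1] core2[OF mul add c2 c1] core2[OF mul add c2 c2] by simp
      also have "\<dots> = I (g11 * a1 x + g12 * a2 x) * A1 + I (g12 * a1 x + g22 * a2 x) * A2
          + I (c * g11 * a1 (a1 x) + g12 * a2 (a1 x) + c * g22 * a2 (a2 x))"
      proof -
        have "I (c * g11 * a1 x) * A1 + I (c * g11 * a1 x) * A1 = I ((c + c) * g11 * a1 x) * A1"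
          by (simp only: distrib_right add)
        moreover have "I (c * g22 * a2 x) * A2 + I (c * g22 * a2 x) * A2 = I ((c + c) * g22 * a2 x) * A2"
          by (simp only: distrib_right add)
        ultimately show ?thesis unfolding cc by (simp add: add algebra_simps)
      qed
      finally have "I (f2 k) * A2 + I (f1 k) * A1 - brk (I (c * g11) * A1 ^ 2 + I g12 * A2 * A1 + I (c * g22) * A2 ^ 2) (I x)
          = I (0 - (c * g11 * a1 (a1 x) + g12 * a2 (a1 x) + c * g22 * a2 (a2 x)))"
        unfolding k1 k2 Iminus I0 by simp
      then show ?thesis by simp
    qed
    have F22: "f2 2 = g12 * p + g22 * r" using g22 by (simp add: algebra_simps)
    have F23: "f2 3 = g12 * q + g22 * t"
    proof -
      have "r * f2 3 = (f2 2 - g12 * p) * t + r * (g12 * q)"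
        using \<open>(f2 2 - g12 * p) * t = r * (f2 3 - g12 * q)\<close> by (simp add: algebra_simps)
      also have "\<dots> = r * (g12 * q + g22 * t)" unfolding g22[symmetric] by (simp add: algebra_simps)
      finally have "r * f2 3 = r * (g12 * q + g22 * t)" .
      then show ?thesis using rn by simp
    qed
    show ?thesis unfolding cong_F0_def d0_def hh
    proof (intro ballI)
      fix k :: nat assume "k \<in> {1, 2, 3}"
      then have "k = 1 \<or> k = 2 \<or> k = 3" by auto
      moreover have "f1 k = g11 * a1 (Xv k) + g12 * a2 (Xv k) \<and> f2 k = g12 * a1 (Xv k) + g22 * a2 (Xv k)"
        if "k = 1 \<or> k = 2 \<or> k = 3"
        using that g11 g12 F12 F13 F22 F23 tri'(1)
        unfolding a_def p_def q_def r_def t_def by (auto simp: algebra_simps)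
      ultimately have "f1 k = g11 * a1 (Xv k) + g12 * a2 (Xv k)" "f2 k = g12 * a1 (Xv k) + g22 * a2 (Xv k)"
        by auto
      from key[OF this] show "\<iota> (f2 k) * j a2 + \<iota> (f1 k) * j a1 -
         brk (\<iota> (cst (1 / 2) * g11) * j a1 ^ 2 + \<iota> g12 * j a2 * j a1 + \<iota> (cst (1 / 2) * g22) * j a2 ^ 2)
          (\<iota> (Xv k)) \<in> range \<iota>"
        unfolding I_def A1_def A2_def c_def .
    qed
  qed
  show ?thesis
    using P1 P2 unfolding a_def r_def p_def by blast
qed

end
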